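(* Let $p_1,p_2$ be relatively prime positive integers with $p_1>p_2+1$ and $p_2\ge2$. Write $p_1=ap_2+b$ with integers $a\ge1$ and $0<b<p_2$. Let $\ell\in\{0,\dots,p_1-p_2-1\}$, write $\ell=\nu p_2+\ell'$ with integers $\nu\ge0$ and $0\le\ell'<p_2$, and let $c\in\big[\frac{\ell}{p_1-p_2},\frac{\ell+1}{p_1-p_2}\big)$. Write the first $p_1+p_2$ terms of $S_c(p_1,p_2)$ as $1^{k_1},2,1^{k_2},2,\dots,1^{k_{p_2}},2,1^{k_{p_2+1}}$. Then: - $k_1=\nu+1$; - for $i=2,\dots,p_2$, $k_i=a+1$ if $i=\lceil (jp_2-\ell')/b\rceil+1$ for some $j\in\{1,\dots,b\}$, and $k_i=a$ otherwise; - $k_{p_2+1}=p_1-(k_1+\cdots+k_{p_2})$.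
   Context: Stationary divisor method with cut point $c\in[0,1]$ for votes $(p_1,p_2)$: seats are allocated one at a time. Initially $a_1=a_2=0$; each next seat goes to a party $i$ maximizing $p_i/(a_i+c)$, whose $a_i$ then increases by $1$. Ties are broken in favor of party $1$. For $c=0$ the convention is that $p_1/0>p_2/0$, and $p_i/0>p_j/k$ for $k>0$. $S_c(p_1,p_2)$ is the infinite sequence of party labels (in $\{1,2\}$) of successive seats. It is periodic with period $p_1+p_2$, and its first $p_1+p_2$ terms contain exactly $p_1$ ones and $p_2$ twos. The notation $1^k$ denotes $k$ consecutive $1$'s. *)

theory Defs
  imports Complex_Main
begin

text \<open>Stationary divisor method with cut point c for votes (p1,p2).\<close>

definition party1_wins :: "real \<Rightarrow> nat \<Rightarrow> nat \<Rightarrow> nat \<Rightarrow> nat \<Rightarrow> bool" where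
  "party1_wins c p1 p2 a1 a2 =
     (if real a1 + c = 0 then True
      else if real a2 + c = 0 then False
      else real p1 / (real a1 + c) \<ge> real p2 / (real a2 + c))"

primrec alloc :: "real \<Rightarrow> nat \<Rightarrow> nat \<Rightarrow> nat \<Rightarrow> nat \<times> nat" where
  "alloc c p1 p2 0 = (0, 0)"
| "alloc c p1 p2 (Suc n) =
     (let (a1, a2) = alloc c p1 p2 n in
      if party1_wins c p1 p2 a1 a2 then (Suc a1, a2) else (a1, Suc a2))"

text \<open>S_c(p1,p2): the label (1 or 2) of the seat number n (0-indexed).\<close>
definition S :: "real \<Rightarrow> nat \<Rightarrow> nat \<Rightarrow> nat \<Rightarrow> nat" where
  "S c p1 p2 n = (case alloc c p1 p2 n of (a1, a2) \<Rightarrow>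
      if party1_wins c p1 p2 a1 a2 then 1 else 2)"

end

theory Submission
  imports Defs
begin

definition Bf :: "nat \<Rightarrow> nat \<Rightarrow> nat \<Rightarrow> nat \<Rightarrow> nat" where
  "Bf p1 p2 l y = (p1 * y + l) div p2 + 1"
definition Df :: "nat \<Rightarrow> nat \<Rightarrow> nat \<Rightarrow> nat \<Rightarrow> nat" where
  "Df p1 p2 l y = (if y = 0 then 0 else Bf p1 p2 l (y - 1))"

lemma win_iff:
  fixes p1 p2 l a1 a2 :: nat and c :: real
  assumes "c \<ge> 0" "p2 < p1" "0 < p2" "real l \<le> c * (real p1 - real p2)"
    "c * (real p1 - real p2) < real l + 1"
  shows "party1_wins c p1 p2 a1 a2 \<longleftrightarrow> p2 * a1 \<le> p1 * a2 + l"
proof -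
  have "party1_wins c p1 p2 a1 a2 \<longleftrightarrow> real p2 * (real a1 + c) \<le> real p1 * (real a2 + c)"
  proof (cases "real a1 + c = 0")
    case True
    then show ?thesis using assms by (auto simp: party1_wins_def)
  next
    case F1: False
    show ?thesis
    proof (cases "real a2 + c = 0")
      case True
      then have "a2 = 0" "c = 0" using assms by auto
      then have "0 < real p2 * real a1" using F1 assms by simp
      moreover have "\<not> party1_wins c p1 p2 a1 a2" using F1 True by (simp add: party1_wins_def)
      ultimately show ?thesis using \<open>a2 = 0\<close> \<open>c = 0\<close> by simp
    next
      case False
      have p1: "real a1 + c > 0" "real a2 + c > 0" using F1 False assms by auto
      then show ?thesis using F1 False
        by (simp add: party1_wins_def divide_le_eq le_divide_eq field_simps)
    qed
  qed
  also have "\<dots> \<longleftrightarrow> real_of_int (int (p2 * a1) - int (p1 * a2)) \<le> c * (real p1 - real p2)"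
    by (simp add: algebra_simps)
  also have "\<dots> \<longleftrightarrow> int (p2 * a1) - int (p1 * a2) \<le> int l"
  proof
    assume h: "real_of_int (int (p2 * a1) - int (p1 * a2)) \<le> c * (real p1 - real p2)"
    then have "real_of_int (int (p2 * a1) - int (p1 * a2)) < real_of_int (int l + 1)"
      using assms by simp
    then show "int (p2 * a1) - int (p1 * a2) \<le> int l" by linarith
  next
    assume "int (p2 * a1) - int (p1 * a2) \<le> int l"
    then have "real_of_int (int (p2 * a1) - int (p1 * a2)) \<le> real l"
      by (metis of_int_le_iff of_int_of_nat_eq)
    then show "real_of_int (int (p2 * a1) - int (p1 * a2)) \<le> c * (real p1 - real p2)"
      using assms by linarith
  qed
  also have "\<dots> \<longleftrightarrow> p2 * a1 \<le> p1 * a2 + l" by linarith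
  finally show ?thesis .
qed

lemma Bf_mono: "y \<le> z \<Longrightarrow> Bf p1 p2 l y \<le> Bf p1 p2 l z"
  unfolding Bf_def by (simp add: div_le_mono)

lemma Df_mono: "y \<le> z \<Longrightarrow> Df p1 p2 l y \<le> Df p1 p2 l z"
  unfolding Df_def using Bf_mono by auto

lemma Df_Suc: "Df p1 p2 l (Suc y) = Bf p1 p2 l y" by (simp add: Df_def)

lemma win_B: "0 < p2 \<Longrightarrow> (p2 * x \<le> p1 * y + l) \<longleftrightarrow> x < Bf p1 p2 l y"
  unfolding Bf_def by (simp add: less_Suc_eq_le less_eq_div_iff_mult_less_eq mult.commute)

lemma alloc_inv:
  assumes hw: "\<And>a1 a2. party1_wins c p1 p2 a1 a2 \<longleftrightarrow> p2 * a1 \<le> p1 * a2 + l" and p2: "0 < p2"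
  shows "alloc c p1 p2 n = (x, y) \<Longrightarrow> x + y = n \<and> x \<le> Bf p1 p2 l y \<and> Df p1 p2 l y \<le> x"
proof (induction n arbitrary: x y)
  case 0
  then show ?case by (auto simp: Df_def)
next
  case (Suc n)
  obtain u v where uv: "alloc c p1 p2 n = (u, v)" by fastforce
  note IH = Suc.IH[OF uv]
  show ?case
  proof (cases "u < Bf p1 p2 l v")
    case True
    then have "party1_wins c p1 p2 u v" using hw win_B[OF p2] by blast
    then have "x = Suc u" "y = v" using Suc.prems uv by auto
    then show ?thesis using IH True by auto
  next
    case False
    then have "\<not> party1_wins c p1 p2 u v" using hw win_B[OF p2] by blast
    then have "x = u" "y = Suc v" using Suc.prems uv by auto
    then show ?thesis using IH False Bf_mono[of v "Suc v" p1 p2 l] by (auto simp: Df_Suc)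
  qed
qed

lemma alloc_at:
  assumes hw: "\<And>a1 a2. party1_wins c p1 p2 a1 a2 \<longleftrightarrow> p2 * a1 \<le> p1 * a2 + l" and p2: "0 < p2"
    and n1: "Df p1 p2 l m + m \<le> n" and n2: "n \<le> Df p1 p2 l (Suc m) + m"
  shows "alloc c p1 p2 n = (n - m, m)"
proof -
  obtain x y where xy: "alloc c p1 p2 n = (x, y)" by fastforce
  note I = alloc_inv[OF hw p2 xy]
  have "y = m"
  proof (rule ccontr)
    assume "y \<noteq> m"
    then consider "y < m" | "m < y" by linarith
    then show False
    proof cases
      case 1
      then have "Df p1 p2 l (Suc y) \<le> Df p1 p2 l m" by (intro Df_mono) simp
      then show ?thesis using I n1 1 by (simp add: Df_Suc)
    next
      case 2
      then have "Df p1 p2 l (Suc m) \<le> Df p1 p2 l y" by (intro Df_mono) simp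
      then show ?thesis using I n2 2 by simp
    qed
  qed
  then show ?thesis using xy I by auto
qed

lemma S_at:
  assumes hw: "\<And>a1 a2. party1_wins c p1 p2 a1 a2 \<longleftrightarrow> p2 * a1 \<le> p1 * a2 + l" and p2: "0 < p2"
    and n1: "Df p1 p2 l m + m \<le> n" and n2: "n \<le> Df p1 p2 l (Suc m) + m"
  shows "S c p1 p2 n = (if n < Df p1 p2 l (Suc m) + m then 1 else 2)"
  using alloc_at[OF hw p2 n1 n2] n1 n2 hw win_B[OF p2]
  by (auto simp: S_def Df_Suc)

lemma seg:
  assumes hw: "\<And>a1 a2. party1_wins c p1 p2 a1 a2 \<longleftrightarrow> p2 * a1 \<le> p1 * a2 + l" and p2: "0 < p2"
  shows "map (S c p1 p2) [Df p1 p2 l m + m..<Df p1 p2 l (Suc m) + m + 1]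
     = replicate (Df p1 p2 l (Suc m) - Df p1 p2 l m) 1 @ [2]"
proof -
  have mono: "Df p1 p2 l m \<le> Df p1 p2 l (Suc m)" by (rule Df_mono) simp
  show ?thesis
  proof (rule nth_equalityI)
    show "length (map (S c p1 p2) [Df p1 p2 l m + m..<Df p1 p2 l (Suc m) + m + 1]) =
      length (replicate (Df p1 p2 l (Suc m) - Df p1 p2 l m) 1 @ [2::nat])" using mono by simp
  next
    fix i assume "i < length (map (S c p1 p2) [Df p1 p2 l m + m..<Df p1 p2 l (Suc m) + m + 1])"
    then have i: "i \<le> Df p1 p2 l (Suc m) - Df p1 p2 l m" using mono by simp
    have "S c p1 p2 (Df p1 p2 l m + m + i) = (if Df p1 p2 l m + m + i < Df p1 p2 l (Suc m) + m then 1 else 2)"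
      by (rule S_at[OF hw p2]) (use i mono in auto)
    moreover have "map (S c p1 p2) [Df p1 p2 l m + m..<Df p1 p2 l (Suc m) + m + 1] ! i
        = S c p1 p2 (Df p1 p2 l m + m + i)"
      using i mono by (simp del: upt_Suc)
    ultimately show "map (S c p1 p2) [Df p1 p2 l m + m..<Df p1 p2 l (Suc m) + m + 1] ! i =
         (replicate (Df p1 p2 l (Suc m) - Df p1 p2 l m) 1 @ [2]) ! i"
      using i mono by (auto simp: nth_append)
  qed
qed

lemma prefix:
  assumes hw: "\<And>a1 a2. party1_wins c p1 p2 a1 a2 \<longleftrightarrow> p2 * a1 \<le> p1 * a2 + l" and p2: "0 < p2"
    and k: "\<And>i. 1 \<le> i \<Longrightarrow> i \<le> M \<Longrightarrow> k i = Df p1 p2 l i - Df p1 p2 l (i - 1)"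
  shows "map (S c p1 p2) [0..<Df p1 p2 l M + M] = concat (map (\<lambda>i. replicate (k i) 1 @ [2]) [1..<M + 1])"
  using k
proof (induction M)
  case 0
  then show ?case by (simp add: Df_def)
next
  case (Suc M)
  have mono: "Df p1 p2 l M \<le> Df p1 p2 l (Suc M)" by (rule Df_mono) simp
  define X where "X = Df p1 p2 l M + M"
  define Y where "Y = Df p1 p2 l (Suc M) + M + 1"
  have XY: "X \<le> Y" using mono by (simp add: X_def Y_def)
  have "[0..<Y] = [0..<X] @ [X..<Y]"
    using XY upt_add_eq_append[of 0 X "Y - X"] by simp
  then have "[0..<Df p1 p2 l (Suc M) + Suc M] = [0..<Df p1 p2 l M + M] @ [Df p1 p2 l M + M..<Df p1 p2 l (Suc M) + M + 1]"
    by (simp add: X_def Y_def)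
  then show ?case using Suc seg[OF hw p2, of M] by simp
qed


lemma key_div:
  fixes Y b p2 :: nat
  assumes "0 < b" "b < p2" "Y + b < (b + 1) * p2"
  shows "(Y + b) div p2 = Y div p2 + (if \<exists>j\<in>{1..b}. Y < j * p2 \<and> j * p2 \<le> Y + b then 1 else 0)"
proof -
  define q where "q = Y div p2"
  define r where "r = Y mod p2"
  have Y: "Y = q * p2 + r" by (simp add: q_def r_def)
  have r: "r < p2" using assms by (simp add: r_def)
  show ?thesis
  proof (cases "p2 \<le> r + b")
    case True
    have d: "(Y + b) div p2 = q + 1"
    proof -
      have e: "Y + b = (r + b - p2) + (q + 1) * p2" using Y True by simp
      have "r + b - p2 < p2" using r assms by linarith
      then have "(r + b - p2) div p2 = 0" by simp
      have "(r + b - p2 + (q + 1) * p2) div p2 = (q + 1) + (r + b - p2) div p2"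
        by (rule div_mult_self1) (use assms in simp)
      then show ?thesis unfolding e using \<open>(r + b - p2) div p2 = 0\<close> by simp
    qed
    have "(q + 1) * p2 \<le> Y + b" using Y True by simp
    then have "(q + 1) * p2 < (b + 1) * p2" using assms by linarith
    then have "q + 1 \<le> b" using mult_less_cancel2 by fastforce
    moreover have "Y < (q + 1) * p2" using Y r by simp
    ultimately have "\<exists>j\<in>{1..b}. Y < j * p2 \<and> j * p2 \<le> Y + b"
      using \<open>(q + 1) * p2 \<le> Y + b\<close> by (intro bexI[of _ "q + 1"]) auto
    then show ?thesis using d q_def by simp
  next
    case False
    have d: "(Y + b) div p2 = q"
    proof -
      have e: "Y + b = (r + b) + q * p2" using Y by simp
      have "(r + b) div p2 = 0" using False by simp
      then show ?thesis unfolding e using assms by simp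
    qed
    have "\<not> (\<exists>j\<in>{1..b}. Y < j * p2 \<and> j * p2 \<le> Y + b)"
    proof
      assume "\<exists>j\<in>{1..b}. Y < j * p2 \<and> j * p2 \<le> Y + b"
      then obtain j where j: "Y < j * p2" "j * p2 \<le> Y + b" by blast
      have "q * p2 < j * p2" using j Y by linarith
      then have "q < j" using mult_less_cancel2 by blast
      then have "(q + 1) * p2 \<le> j * p2" by (intro mult_le_mono1) simp
      then show False using j Y False by simp
    qed
    then show ?thesis using d q_def by simp
  qed
qed

lemma key_ceil:
  fixes j b p2 l' n :: nat
  assumes "0 < b"
  shows "(int (n + 2) = \<lceil>(real (j * p2) - real l') / real b\<rceil> + 1) \<longleftrightarrow>
         (b * n + l' < j * p2 \<and> j * p2 \<le> b * (n + 1) + l')"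
proof -
  have "(int (n + 2) = \<lceil>(real (j * p2) - real l') / real b\<rceil> + 1) \<longleftrightarrow>
        \<lceil>(real (j * p2) - real l') / real b\<rceil> = int (n + 1)" by linarith
  also have "\<dots> \<longleftrightarrow> real n < (real (j * p2) - real l') / real b \<and>
        (real (j * p2) - real l') / real b \<le> real n + 1"
    by (simp add: ceiling_eq_iff add.commute)
  also have "\<dots> \<longleftrightarrow> real n * real b < real (j * p2) - real l' \<and>
        real (j * p2) - real l' \<le> (real n + 1) * real b"
    using assms by (simp add: less_divide_eq divide_le_eq)
  also have "\<dots> \<longleftrightarrow> real (b * n + l') < real (j * p2) \<and> real (j * p2) \<le> real (b * (n + 1) + l')"
    by (simp add: algebra_simps)
  also have "\<dots> \<longleftrightarrow> (b * n + l' < j * p2 \<and> j * p2 \<le> b * (n + 1) + l')"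
    by (simp only: of_nat_less_iff of_nat_le_iff)
  finally show ?thesis .
qed


lemma Df_sum:
  assumes "m \<le> p2"
  shows "(\<Sum>i=1..m. (if i \<le> p2 then Df p1 p2 l i - Df p1 p2 l (i - 1) else p1 - Df p1 p2 l p2)) = Df p1 p2 l m"
  using assms
proof (induction m)
  case 0
  then show ?case by (simp add: Df_def)
next
  case (Suc m)
  have "Df p1 p2 l m \<le> Df p1 p2 l (Suc m)" by (rule Df_mono) simp
  then show ?case using Suc by (simp add: sum.cl_ivl_Suc)
qed

theorem mainTheorem11:
  fixes p1 p2 a b l \<nu> l' :: nat and c :: real
  assumes "coprime p1 p2" and "p2 \<ge> 2" and "p1 > p2 + 1"
    and "p1 = a * p2 + b" and "a \<ge> 1" and "0 < b" and "b < p2"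
    and "l \<le> p1 - p2 - 1"
    and "l = \<nu> * p2 + l'" and "l' < p2"
    and "real l / real (p1 - p2) \<le> c" and "c < (real l + 1) / real (p1 - p2)"
  shows "\<exists>k :: nat \<Rightarrow> nat.
           map (S c p1 p2) [0..<p1 + p2] =
             concat (map (\<lambda>i. replicate (k i) 1 @ [2]) [1..<p2 + 1]) @ replicate (k (p2 + 1)) 1
         \<and> k 1 = \<nu> + 1
         \<and> (\<forall>i\<in>{2..p2}. k i = (if \<exists>j\<in>{1..b}.
                 int i = \<lceil>(real (j * p2) - real l') / real b\<rceil> + 1 then a + 1 else a))
         \<and> k (p2 + 1) = p1 - (\<Sum>i=1..p2. k i)"
proof -
  define D where "D = Df p1 p2 l"
  define k where "k = (\<lambda>i. if i \<le> p2 then D i - D (i - 1) else p1 - D p2)"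
  have p2: "0 < p2" using assms(2) by simp
  have dpos: "real (p1 - p2) > 0" using assms(3) by simp
  have dr: "real (p1 - p2) = real p1 - real p2" using assms(3) by simp
  have c1: "real l \<le> c * (real p1 - real p2)"
    using assms(11) dpos dr by (simp add: divide_le_eq)
  have c2: "c * (real p1 - real p2) < real l + 1"
    using assms(12) dpos dr by (simp add: less_divide_eq)
  have "0 \<le> c * (real p1 - real p2)" using c1 by (meson of_nat_0_le_iff order_trans)
  then have c0: "c \<ge> 0" using dpos dr by (simp add: zero_le_mult_iff)
  have hw: "\<And>a1 a2. party1_wins c p1 p2 a1 a2 \<longleftrightarrow> p2 * a1 \<le> p1 * a2 + l"
    by (rule win_iff[OF c0 _ p2 c1 c2]) (use assms(3) in simp)
  have lp1: "l < p1" using assms by linarith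
  have Dp2: "D p2 \<le> p1"
  proof -
    have "D p2 = (p1 * (p2 - 1) + l) div p2 + 1" using p2 by (simp add: D_def Df_def Bf_def)
    moreover have "p1 * (p2 - 1) + l < p1 * p2"
    proof -
      have "p1 * p2 = p1 * (p2 - 1) + p1" using p2 by (cases p2) auto
      then show ?thesis using lp1 by linarith
    qed
    then have "(p1 * (p2 - 1) + l) div p2 < p1" using p2 by (simp add: div_less_iff_less_mult mult.commute)
    ultimately show ?thesis by simp
  qed
  have DS: "D (Suc p2) \<ge> p1 + 1"
  proof -
    have "D (Suc p2) = (p1 * p2 + l) div p2 + 1" by (simp add: D_def Df_def Bf_def)
    moreover have "(p1 * p2 + l) div p2 \<ge> p1" using p2
      by (simp add: less_eq_div_iff_mult_less_eq)
    ultimately show ?thesis by simp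
  qed
  have pre: "map (S c p1 p2) [0..<D p2 + p2] = concat (map (\<lambda>i. replicate (k i) 1 @ [2]) [1..<p2 + 1])"
    unfolding D_def by (rule prefix[OF hw p2]) (simp add: k_def D_def)
  have tail: "map (S c p1 p2) [D p2 + p2..<p1 + p2] = replicate (k (p2 + 1)) 1"
  proof (rule nth_equalityI)
    show "length (map (S c p1 p2) [D p2 + p2..<p1 + p2]) = length (replicate (k (p2 + 1)) (1::nat))"
      by (simp add: k_def)
  next
    fix i assume i: "i < length (map (S c p1 p2) [D p2 + p2..<p1 + p2])"
    then have i': "D p2 + p2 + i < p1 + p2" by simp
    have "S c p1 p2 (D p2 + p2 + i) = (if D p2 + p2 + i < D (Suc p2) + p2 then 1 else 2)"
      unfolding D_def by (rule S_at[OF hw p2]) (use i' DS in \<open>auto simp: D_def\<close>)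
    then have "S c p1 p2 (D p2 + p2 + i) = 1" using i' DS by simp
    then show "map (S c p1 p2) [D p2 + p2..<p1 + p2] ! i = replicate (k (p2 + 1)) 1 ! i"
      using i by (simp add: k_def)
  qed
  have split: "[0..<p1 + p2] = [0..<D p2 + p2] @ [D p2 + p2..<p1 + p2]"
    using upt_add_eq_append[of 0 "D p2 + p2" "p1 - D p2"] Dp2 by (simp add: add.commute)
  have L: "map (S c p1 p2) [0..<p1 + p2] =
             concat (map (\<lambda>i. replicate (k i) 1 @ [2]) [1..<p2 + 1]) @ replicate (k (p2 + 1)) 1"
    unfolding split using pre tail by simp
  have K1: "k 1 = \<nu> + 1"
    using p2 assms(9,10) by (simp add: k_def D_def Df_def Bf_def)
  have KS: "k (p2 + 1) = p1 - (\<Sum>i=1..p2. k i)"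
    using Df_sum[of p2 p2 p1 l] by (simp add: k_def D_def)
  have KI: "\<forall>i\<in>{2..p2}. k i = (if \<exists>j\<in>{1..b}.
                 int i = \<lceil>(real (j * p2) - real l') / real b\<rceil> + 1 then a + 1 else a)"
  proof
    fix i assume "i \<in> {2..p2}"
    then obtain n where n: "i = n + 2" "n + 2 \<le> p2"
      by (intro that[of "i - 2"]) auto
    define Y where "Y = b * n + l'"
    have e1: "p1 * (n + 1) + l = (Y + b) + (a * (n + 1) + \<nu>) * p2"
      using assms(4,9) by (simp add: Y_def algebra_simps)
    have e0: "p1 * n + l = Y + (a * n + \<nu>) * p2"
      using assms(4,9) by (simp add: Y_def algebra_simps)
    have f1: "(p1 * (n + 1) + l) div p2 = (a * (n + 1) + \<nu>) + (Y + b) div p2"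
      unfolding e1 by (rule div_mult_self1) (use p2 in simp)
    have f0: "(p1 * n + l) div p2 = (a * n + \<nu>) + Y div p2"
      unfolding e0 by (rule div_mult_self1) (use p2 in simp)
    have Yb: "Y + b < (b + 1) * p2"
    proof -
      have "b * n \<le> b * (p2 - 2)" using n by (intro mult_le_mono2) linarith
      then have "Y + b \<le> b * (p2 - 2) + l' + b" by (simp add: Y_def)
      also have "\<dots> = b * (p2 - 1) + l'" using n
      proof -
        have "p2 - 1 = (p2 - 2) + 1" using n by simp
        then show ?thesis by simp
      qed
      also have "\<dots> < b * (p2 - 1) + p2" using assms(10) by simp
      also have "\<dots> \<le> (b + 1) * p2" by (simp add: algebra_simps)
      finally show ?thesis .
    qed
    have kd: "(Y + b) div p2 = Y div p2 + (if \<exists>j\<in>{1..b}. Y < j * p2 \<and> j * p2 \<le> Y + b then 1 else 0)"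
      by (rule key_div[OF assms(6,7) Yb])
    have ki: "k i = (p1 * (n + 1) + l) div p2 - (p1 * n + l) div p2"
      using n by (simp add: k_def D_def Df_def Bf_def)
    have cond: "(\<exists>j\<in>{1..b}. int i = \<lceil>(real (j * p2) - real l') / real b\<rceil> + 1) \<longleftrightarrow>
                (\<exists>j\<in>{1..b}. Y < j * p2 \<and> j * p2 \<le> Y + b)"
    proof -
      have "\<And>j. (int i = \<lceil>(real (j * p2) - real l') / real b\<rceil> + 1) \<longleftrightarrow> (Y < j * p2 \<and> j * p2 \<le> Y + b)"
      proof -
        fix j
        have "b * (n + 1) + l' = Y + b" by (simp add: Y_def)
        then show "(int i = \<lceil>(real (j * p2) - real l') / real b\<rceil> + 1) \<longleftrightarrow> (Y < j * p2 \<and> j * p2 \<le> Y + b)"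
          using key_ceil[OF assms(6), of n j p2 l'] n(1) by (simp only: Y_def)
      qed
      then show ?thesis by blast
    qed
    show "k i = (if \<exists>j\<in>{1..b}.
                 int i = \<lceil>(real (j * p2) - real l') / real b\<rceil> + 1 then a + 1 else a)"
      unfolding cond ki f1 f0 kd by (cases "\<exists>j\<in>{1..b}. Y < j * p2 \<and> j * p2 \<le> Y + b") (simp_all add: add_mult_distrib2)
  qed
  show ?thesis using L K1 KI KS by blast
qed

end
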